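(* Let $A=\{a,b,c\}$, $\Lambda=\{ab^ic\mid i\geq 1\}$ and $\mathcal{T}_2=\{((ab^ic)^2,\varepsilon)\mid i\ge 1\}$. If $w\in A^\ast$ is $\mathcal{T}_2$-irreducible and right invertible in $\Pi_2=\langle a,b,c\mid (ab^ic)^2=1\ (i\geq 1)\rangle$, then $w\in \mathrm{Pre}(\Lambda)^\ast$.
   Context: A word $w$ is $\mathcal{T}_2$-irreducible if it contains no factor of the form $(ab^ic)^2$ with $i\ge1$. $w$ is right invertible in $\Pi_2$ if there is $w'$ with $ww'=1$ in $\Pi_2$. $\mathrm{Pre}(\Lambda)$ denotes the set of non-empty prefixes of words in $\Lambda$, and $\mathrm{Pre}(\Lambda)^\ast$ the set of finite concatenations of such prefixes. *)

theory Defs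
  imports Main "HOL-Library.Sublist"
begin

datatype letter = a | b | c

definition lam :: "nat \<Rightarrow> letter list" where
  "lam i = [a] @ replicate i b @ [c]"

definition Lambda :: "letter list set" where
  "Lambda = {lam i | i. i \<ge> 1}"

definition relator :: "letter list \<Rightarrow> bool" where
  "relator r \<longleftrightarrow> (\<exists>i\<ge>1. r = lam i @ lam i)"

text \<open>The monoid congruence on words generated by the relations r = empty word,
  i.e. equality in the monoid Pi_2.\<close>
inductive pi2_eq :: "letter list \<Rightarrow> letter list \<Rightarrow> bool" where
  refl: "pi2_eq u u"
| sym: "pi2_eq u v \<Longrightarrow> pi2_eq v u"
| trans: "pi2_eq u v \<Longrightarrow> pi2_eq v w \<Longrightarrow> pi2_eq u w"
| rel: "relator r \<Longrightarrow> pi2_eq (u @ r @ v) (u @ v)"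

definition right_invertible :: "letter list \<Rightarrow> bool" where
  "right_invertible w \<longleftrightarrow> (\<exists>w'. pi2_eq (w @ w') [])"

definition T2_irreducible :: "letter list \<Rightarrow> bool" where
  "T2_irreducible w \<longleftrightarrow> \<not> (\<exists>u v r. relator r \<and> w = u @ r @ v)"

definition Pre :: "letter list set \<Rightarrow> letter list set" where
  "Pre L = {p. p \<noteq> [] \<and> (\<exists>x\<in>L. prefix p x)}"

definition star :: "letter list set \<Rightarrow> letter list set" where
  "star S = {concat ps | ps. set ps \<subseteq> S}"

end

theory Submission
  imports Defs
begin

lemma star_nil: "[] \<in> star X"
  unfolding star_def by (rule CollectI, rule exI[of _ "[]"]) simp

lemma star_single: "x \<in> X \<Longrightarrow> x \<in> star X"
  unfolding star_def by (rule CollectI, rule exI[of _ "[x]"]) simp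

lemma star_app: "x \<in> star X \<Longrightarrow> y \<in> star X \<Longrightarrow> x @ y \<in> star X"
proof -
  assume "x \<in> star X" "y \<in> star X"
  then obtain ps qs where "x = concat ps" "set ps \<subseteq> X" "y = concat qs" "set qs \<subseteq> X"
    unfolding star_def by blast
  then show ?thesis unfolding star_def by (intro CollectI exI[of _ "ps @ qs"]) simp
qed

lemma star_prefix_aux: "set ps \<subseteq> Pre L \<Longrightarrow> prefix p (concat ps) \<Longrightarrow> p \<in> star (Pre L)"
proof (induction ps arbitrary: p)
  case Nil
  then show ?case by (simp add: star_nil)
next
  case (Cons x ps)
  have xP: "x \<in> Pre L" using Cons.prems by simp
  from Cons.prems(2) have "prefix p x \<or> (\<exists>us. p = x @ us \<and> prefix us (concat ps))"
    by (simp add: prefix_append)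
  then show ?case
  proof
    assume h: "prefix p x"
    show ?thesis
    proof (cases "p = []")
      case True then show ?thesis by (simp add: star_nil)
    next
      case False
      from xP obtain y where "y \<in> L" "prefix x y" unfolding Pre_def by blast
      moreover have "prefix p y" using h \<open>prefix x y\<close> by (rule prefix_order.trans)
      ultimately have "p \<in> Pre L" using False unfolding Pre_def by blast
      then show ?thesis by (rule star_single)
    qed
  next
    assume "\<exists>us. p = x @ us \<and> prefix us (concat ps)"
    then obtain us where "p = x @ us" "prefix us (concat ps)" by blast
    moreover have "set ps \<subseteq> Pre L" using Cons.prems(1) by simp
    ultimately have "us \<in> star (Pre L)" using Cons.IH by blast
    then show ?thesis using star_app[OF star_single[OF xP]] \<open>p = x @ us\<close> by simp
  qed
qed

lemma star_prefix: "x \<in> star (Pre L) \<Longrightarrow> prefix p x \<Longrightarrow> p \<in> star (Pre L)"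
proof -
  assume h: "x \<in> star (Pre L)" "prefix p x"
  then obtain ps where "x = concat ps" "set ps \<subseteq> Pre L" unfolding star_def by blast
  then show ?thesis using star_prefix_aux h(2) by blast
qed

lemma relator_star: "relator r \<Longrightarrow> r \<in> star (Pre Lambda)"
proof -
  assume "relator r"
  then obtain i where i: "i \<ge> 1" "r = lam i @ lam i" unfolding relator_def by blast
  have "lam i \<in> Pre Lambda" unfolding Pre_def Lambda_def lam_def using i by auto
  then show ?thesis using i star_app star_single by blast
qed

lemma filter_a_rel: "relator r \<Longrightarrow> filter ((=) a) r = [a, a]"
  unfolding relator_def lam_def by (auto simp: filter_replicate)

lemma hd_rel: "relator r \<Longrightarrow> \<exists>q. r = a # q"
  unfolding relator_def lam_def by auto

lemma last_rel: "relator r \<Longrightarrow> \<exists>q. r = q @ [c]"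
  unfolding relator_def lam_def by auto

lemma rel_suffix_eq: "relator r \<Longrightarrow> relator r' \<Longrightarrow> r' = zs @ r \<Longrightarrow> zs = []"
proof -
  assume h: "relator r" "relator r'" "r' = zs @ r"
  have "filter ((=) a) zs = []" using h filter_a_rel[OF h(1)] filter_a_rel[OF h(2)] by simp
  moreover obtain q where "r' = a # q" using hd_rel[OF h(2)] by blast
  ultimately show "zs = []" using h by (cases zs) auto
qed

lemma rel_decomp_unique:
  assumes "relator r" "relator r'" "t @ r = t' @ r'"
  shows "t = t' \<and> r = r'"
proof -
  have "suffix r (t @ r)" by (simp add: suffix_def)
  moreover have "suffix r' (t @ r)" unfolding assms(3) by (simp add: suffix_def)
  ultimately
  have "suffix r r' \<or> suffix r' r" by (rule suffix_same_cases)
  then have "r = r'"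
  proof
    assume "suffix r r'" then obtain zs where "r' = zs @ r" unfolding suffix_def by blast
    then show ?thesis using rel_suffix_eq assms by blast
  next
    assume "suffix r' r" then obtain zs where "r = zs @ r'" unfolding suffix_def by blast
    then show ?thesis using rel_suffix_eq assms by blast
  qed
  then show ?thesis using assms by simp
qed

definition step :: "letter list \<Rightarrow> letter \<Rightarrow> letter list" where
  "step s l = (if \<exists>t r. relator r \<and> s @ [l] = t @ r
     then (THE t. \<exists>r. relator r \<and> s @ [l] = t @ r) else s @ [l])"

lemma step_rel: "relator r \<Longrightarrow> s @ [l] = t @ r \<Longrightarrow> step s l = t"
  unfolding step_def
  apply (subst if_P, blast)
  apply (rule the_equality, blast)
  using rel_decomp_unique by metis

lemma step_norel: "\<not> (\<exists>t r. relator r \<and> s @ [l] = t @ r) \<Longrightarrow> step s l = s @ [l]"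
  unfolding step_def by (rule if_not_P)

lemma step_cases: "step s l = s @ [l] \<or> (\<exists>r. relator r \<and> s @ [l] = step s l @ r)"
  by (metis step_norel step_rel)

lemma step_noc: "l \<noteq> c \<Longrightarrow> step s l = s @ [l]"
  apply (rule step_norel)
  apply clarify
  apply (drule last_rel)
  by auto

lemma foldl_noc: "c \<notin> set xs \<Longrightarrow> foldl step s xs = s @ xs"
  by (induction xs arbitrary: s) (auto simp: step_noc)

lemma irr_prefix: "T2_irreducible (t @ q) \<Longrightarrow> T2_irreducible t"
  unfolding T2_irreducible_def by (metis append.assoc)

lemma irr_step: "T2_irreducible s \<Longrightarrow> T2_irreducible (step s l)"
proof (cases "\<exists>t r. relator r \<and> s @ [l] = t @ r")
  case True
  then obtain t r where tr: "relator r" "s @ [l] = t @ r" by blast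
  then have st: "step s l = t" by (rule step_rel)
  obtain q where "r = q @ [c]" using last_rel[OF tr(1)] by blast
  then have "s = t @ q" using tr by simp
  then show "T2_irreducible s \<Longrightarrow> ?thesis" using st irr_prefix by simp
next
  case False
  assume irr: "T2_irreducible s"
  have "T2_irreducible (s @ [l])"
    unfolding T2_irreducible_def
  proof
    assume "\<exists>u v r. relator r \<and> s @ [l] = u @ r @ v"
    then obtain u v r where h: "relator r" "s @ [l] = u @ r @ v" by blast
    show False
    proof (cases v rule: rev_cases)
      case Nil then show False using False h by auto
    next
      case (snoc v' x)
      then have "s = u @ r @ v'" using h by simp
      then show False using irr h unfolding T2_irreducible_def by blast
    qed
  qed
  then show ?thesis using step_norel[OF False] by simp
qed

lemma irr_foldl: "T2_irreducible s \<Longrightarrow> T2_irreducible (foldl step s xs)"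
  by (induction xs arbitrary: s) (auto simp: irr_step)

lemma lam_split: "lam i = (a # replicate i b) @ [c]"
  unfolding lam_def by simp

lemma foldl_lam: "foldl step s (lam i) = step (s @ a # replicate i b) c"
  unfolding lam_split by (simp add: foldl_noc step_noc)

lemma fa_lam: "filter ((=) a) (lam k) = [a]" unfolding lam_def by (auto simp: filter_replicate)
lemma hd_lam: "\<exists>q. lam k = a # q" unfolding lam_def by auto

lemma lam_zs: assumes z: "lam j = zs @ lam i" shows "zs = []"
proof (rule ccontr)
  assume ne: "zs \<noteq> []"
  obtain q where q: "lam j = a # q" using hd_lam by blast
  then obtain zs' where "zs = a # zs'" using z ne by (cases zs) auto
  then have "filter ((=) a) (lam j) = a # filter ((=) a) zs' @ [a]"
    unfolding z by (simp add: fa_lam)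
  then show False by (simp add: fa_lam)
qed

lemma lam_suffix_eq: "i \<ge> 1 \<Longrightarrow> s @ lam i = t @ lam j @ lam j \<Longrightarrow> j \<ge> 1 \<Longrightarrow> s = t @ lam j \<and> i = j"
proof -
  assume h: "i \<ge> 1" "s @ lam i = t @ lam j @ lam j" "j \<ge> 1"
  have "suffix (lam i) (s @ lam i)" by (simp add: suffix_def)
  moreover have "suffix (lam j) (s @ lam i)" unfolding h(2) suffix_def by (rule exI[of _ "t @ lam j"]) simp
  ultimately
  have "suffix (lam i) (lam j) \<or> suffix (lam j) (lam i)" by (rule suffix_same_cases)
  then have "lam i = lam j"
  proof
    assume "suffix (lam i) (lam j)" then obtain zs where z: "lam j = zs @ lam i" unfolding suffix_def by blast
    then show ?thesis using lam_zs[OF z] by simp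
  next
    assume "suffix (lam j) (lam i)" then obtain zs where z: "lam i = zs @ lam j" unfolding suffix_def by blast
    then show ?thesis using lam_zs[OF z] by simp
  qed
  have len: "\<And>k. length (lam k) = k + 2" by (simp add: lam_def)
  have "length (lam i) = length (lam j)" using \<open>lam i = lam j\<close> by (rule arg_cong)
  then have "i + 2 = j + 2" by (simp only: len)
  then have ij: "i = j" by simp
  have "s @ lam j = (t @ lam j) @ lam j" using h(2) ij by simp
  then have "s = t @ lam j" by (simp only: append_same_eq)
  then show ?thesis using ij by simp
qed

lemma foldl_rel: assumes irr: "T2_irreducible s" and r: "relator r"
  shows "foldl step s r = s"
proof -
  obtain i where i: "i \<ge> 1" "r = lam i @ lam i" using r unfolding relator_def by blast
  show ?thesis
  proof (cases "\<exists>t. s = t @ lam i")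
    case True
    then obtain t where t: "s = t @ lam i" by blast
    have "foldl step s (lam i) = t"
      unfolding foldl_lam
      by (rule step_rel[OF r]) (simp add: t i lam_split)
    moreover have "foldl step t (lam i) = s"
    proof -
      have "step (t @ a # replicate i b) c = (t @ a # replicate i b) @ [c]"
      proof (rule step_norel, clarify)
        fix t' r' assume h: "relator r'" "(t @ a # replicate i b) @ [c] = t' @ r'"
        then have "s = t' @ r' @ []" using t by (simp add: lam_split)
        then show False using irr h unfolding T2_irreducible_def by blast
      qed
      then show ?thesis unfolding foldl_lam t by (simp add: lam_split)
    qed
    ultimately show ?thesis using i by simp
  next
    case False
    have "step (s @ a # replicate i b) c = (s @ a # replicate i b) @ [c]"
    proof (rule step_norel, clarify)
      fix t' r' assume h: "relator r'" "(s @ a # replicate i b) @ [c] = t' @ r'"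
      then obtain j where j: "j \<ge> 1" "r' = lam j @ lam j" unfolding relator_def by blast
      have "s @ lam i = t' @ lam j @ lam j" using h j by (simp add: lam_split)
      then have "s = t' @ lam j \<and> i = j" using lam_suffix_eq i j by blast
      then have "s = t' @ lam i" by simp
      then show False using False by blast
    qed
    then have "foldl step s (lam i) = s @ lam i"
      unfolding foldl_lam by (simp add: lam_split)
    moreover have "foldl step (s @ lam i) (lam i) = s"
      unfolding foldl_lam
      by (rule step_rel[OF r]) (simp add: i lam_split)
    ultimately show ?thesis using i by simp
  qed
qed

definition red :: "letter list \<Rightarrow> letter list" where
  "red x = foldl step [] x"

lemma irr_nil: "T2_irreducible []"
  unfolding T2_irreducible_def relator_def lam_def by auto

lemma red_irr: "T2_irreducible (red x)"
  unfolding red_def using irr_foldl irr_nil by blast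

lemma pi2_red: "pi2_eq x y \<Longrightarrow> red x = red y"
proof (induction rule: pi2_eq.induct)
  case (rel r u v)
  then show ?case unfolding red_def
    using foldl_rel[OF red_irr[unfolded red_def] rel] by simp
qed auto

lemma red_id: "T2_irreducible w \<Longrightarrow> red w = w"
proof (induction w rule: rev_induct)
  case Nil then show ?case by (simp add: red_def)
next
  case (snoc l w)
  then have "red w = w" using irr_prefix by blast
  then have "red (w @ [l]) = step w l" unfolding red_def by simp
  also have "\<dots> = w @ [l]"
  proof (rule step_norel, clarify)
    fix t r assume "relator r" "w @ [l] = t @ r"
    then show False using snoc.prems unfolding T2_irreducible_def by (metis append_Nil2)
  qed
  finally show ?case .
qed

lemma fold_star: "foldl step s y = [] \<Longrightarrow> s \<in> star (Pre Lambda)"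
proof (induction y arbitrary: s)
  case Nil then show ?case by (simp add: star_nil)
next
  case (Cons l y)
  have h: "step s l \<in> star (Pre Lambda)" using Cons.prems by (intro Cons.IH) simp
  from step_cases[of s l] have "s @ [l] \<in> star (Pre Lambda)"
  proof
    assume "step s l = s @ [l]" then show ?thesis using h by simp
  next
    assume "\<exists>r. relator r \<and> s @ [l] = step s l @ r"
    then obtain r where r: "relator r" "s @ [l] = step s l @ r" by blast
    show ?thesis unfolding r(2) by (rule star_app[OF h relator_star[OF r(1)]])
  qed
  moreover have "prefix s (s @ [l])" by simp
  ultimately show ?case by (rule star_prefix)
qed

theorem mainTheorem6:
  fixes w :: "letter list"
  assumes "T2_irreducible w"
    and "right_invertible w"
  shows "w \<in> star (Pre Lambda)"
proof -
  obtain w' where "pi2_eq (w @ w') []" using assms(2) unfolding right_invertible_def by blast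
  then have "red (w @ w') = red []" by (rule pi2_red)
  then have "red (w @ w') = []" by (simp add: red_def)
  then have "foldl step w w' = []" using red_id[OF assms(1)] unfolding red_def by simp
  then show ?thesis by (rule fold_star)
qed

end
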